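(* Let $A$ be a real symmetric positive semidefinite $n\times n$ matrix, $P$ an orthogonal projection matrix, $T\in\{1,\dots,n\}$, and $u>\lambda_{\max}(A)$. Then $$\sum_{i=n-T+1}^n\frac{1}{u-\lambda_i(PAP)}\le\sum_{i=n-T+1}^n\frac{1}{u-\lambda_i(A)}.$$
   Context: Eigenvalues $\lambda_1\le\dots\le\lambda_n$ of a symmetric matrix are listed in increasing order. *)

theory Defs
  imports "Jordan_Normal_Form.Char_Poly" "HOL-Library.Multiset"
begin

text \<open>Eigenvalues (with multiplicity) of a square real matrix, as the roots of its
characteristic polynomial, listed in increasing order. For a real symmetric
n x n matrix this list has length n.\<close>
definition eigs :: "real mat \<Rightarrow> real list" where
  "eigs A = sorted_list_of_multiset (proots (char_poly A))"

text \<open>lambda_i(A), 1-based: lambda_1 \<le> ... \<le> lambda_n.\<close>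
definition eig :: "real mat \<Rightarrow> nat \<Rightarrow> real" where
  "eig A i = eigs A ! (i - 1)"

definition lambda_max :: "real mat \<Rightarrow> real" where
  "lambda_max A = eig A (dim_row A)"

definition symmetric_mat :: "real mat \<Rightarrow> bool" where
  "symmetric_mat A \<longleftrightarrow> A\<^sup>T = A"

definition psd_mat :: "nat \<Rightarrow> real mat \<Rightarrow> bool" where
  "psd_mat n A \<longleftrightarrow> A \<in> carrier_mat n n \<and> symmetric_mat A \<and>
     (\<forall>x \<in> carrier_vec n. 0 \<le> x \<bullet> (A *\<^sub>v x))"

definition orth_proj_mat :: "nat \<Rightarrow> real mat \<Rightarrow> bool" where
  "orth_proj_mat n P \<longleftrightarrow> P \<in> carrier_mat n n \<and> P * P = P \<and> P\<^sup>T = P"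

end

theory Submission
  imports Defs "Jordan_Normal_Form.Schur_Decomposition" "HOL-Computational_Algebra.Fundamental_Theorem_Algebra"
begin


lemma sym_real_eigenvalue:
  fixes A :: "real mat"
  assumes A: "A \<in> carrier_mat n n" and sym: "transpose_mat A = A" and n: "0 < n"
  shows "\<exists>e. eigenvalue A e"
proof -
  let ?Ac = "map_mat complex_of_real A"
  have Ac: "?Ac \<in> carrier_mat n n" using A by simp
  have cp: "char_poly ?Ac = map_poly of_real (char_poly A)"
    using of_real_hom.char_poly_hom[OF A] by simp
  have "degree (char_poly ?Ac) = n" using degree_monic_char_poly[OF Ac] by simp
  hence "\<not> constant (poly (char_poly ?Ac))" using n by (simp add: constant_degree)
  then obtain z where z: "poly (char_poly ?Ac) z = 0" using fundamental_theorem_of_algebra by blast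
  hence "eigenvalue ?Ac z" using eigenvalue_root_char_poly[OF Ac] by simp
  then obtain v where v: "v \<in> carrier_vec n" "v \<noteq> 0\<^sub>v n" "?Ac *\<^sub>v v = z \<cdot>\<^sub>v v"
    unfolding eigenvalue_def eigenvector_def using Ac by auto
  define S where "S = (\<Sum>i<n. \<Sum>j<n. cnj (v$i) * of_real (A$$(i,j)) * v$j)"
  define N where "N = (\<Sum>i<n. cnj (v$i) * v$i)"
  have S1: "S = z * N"
  proof -
    have "\<And>i. i < n \<Longrightarrow> (\<Sum>j<n. cnj (v$i) * of_real (A$$(i,j)) * v$j) = cnj (v$i) * (z * v$i)"
    proof -
      fix i assume i: "i < n"
      have "(?Ac *\<^sub>v v) $ i = (\<Sum>j<n. of_real (A$$(i,j)) * v$j)"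
        using i A v(1) by (auto simp: scalar_prod_def lessThan_atLeast0)
      hence "(\<Sum>j<n. of_real (A$$(i,j)) * v$j) = z * v$i" using v(3) i v(1) by simp
      thus "(\<Sum>j<n. cnj (v$i) * of_real (A$$(i,j)) * v$j) = cnj (v$i) * (z * v$i)"
        by (simp add: sum_distrib_left[symmetric] mult.assoc)
    qed
    hence "S = (\<Sum>i<n. cnj (v$i) * (z * v$i))" unfolding S_def by simp
    thus ?thesis unfolding N_def by (simp add: sum_distrib_left algebra_simps)
  qed
  have S2: "cnj S = S"
  proof -
    have "cnj S = (\<Sum>i<n. \<Sum>j<n. v$i * of_real (A$$(i,j)) * cnj (v$j))"
      unfolding S_def by (simp add: cnj_sum)
    also have "\<dots> = (\<Sum>j<n. \<Sum>i<n. v$i * of_real (A$$(i,j)) * cnj (v$j))"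
      by (rule sum.swap)
    also have "\<dots> = S" unfolding S_def
    proof (intro sum.cong refl)
      fix j i assume j: "j \<in> {..<n}" and i: "i \<in> {..<n}"
      have "A $$ (i,j) = A $$ (j,i)"
        using arg_cong[OF sym, of "\<lambda>M. M $$ (j,i)"] i j A by auto
      thus "v$i * of_real (A$$(i,j)) * cnj (v$j) = cnj (v$j) * of_real (A$$(j,i)) * v$i"
        by simp
    qed
    finally show ?thesis .
  qed
  have N: "N = of_real (\<Sum>i<n. (cmod (v$i))^2)"
    unfolding N_def of_real_sum by (intro sum.cong refl) (metis complex_norm_square of_real_power mult.commute)
  obtain k where k: "k < n" "v $ k \<noteq> 0" using v(1,2) by (metis eq_vecI carrier_vecD index_zero_vec)
  have "(\<Sum>i<n. (cmod (v$i))^2) > 0"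
    by (rule sum_pos2[of _ k]) (use k in auto)
  hence N0: "N \<noteq> 0" using N by (metis of_real_eq_0_iff order_less_irrefl)
  have cN: "cnj N = N" using N by (metis Reals_cnj_iff Reals_of_real)
  have "cnj z * N = z * N" using S1 S2 cN by (metis complex_cnj_mult)
  hence "cnj z = z" using N0 by simp
  hence zr: "z = of_real (Re z)" by (metis Reals_cnj_iff complex_is_Real_iff of_real_Re)
  have "of_real (poly (char_poly A) (Re z)) = (0::complex)"
    using z cp zr of_real_hom.poly_map_poly[of "char_poly A" "Re z"] by metis
  hence "poly (char_poly A) (Re z) = 0" by simp
  thus ?thesis using eigenvalue_root_char_poly[OF A] by blast
qed




lemma conj_real_vec[simp]: "conjugate (w :: real vec) = w"
  by (rule eq_vecI) auto

lemma sprod_self_nonneg: "0 \<le> (w :: real vec) \<bullet> w"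
  unfolding scalar_prod_def by (intro sum_nonneg) auto

lemma orthonormal_completion:
  fixes v :: "real vec"
  assumes v: "v \<in> carrier_vec n" and v1: "v \<bullet> v = 1"
  shows "\<exists>W. W \<in> carrier_mat n n \<and> transpose_mat W * W = 1\<^sub>m n \<and> col W 0 = v"
proof -
  have v0: "v \<noteq> 0\<^sub>v n" using v1 v by auto
  interpret cof_vec_space n "TYPE(real)" .
  define b where "b = basis_completion v"
  from basis_completion[OF v v0, folded b_def]
  have dist_b: "distinct b" and indep: "\<not> lin_dep (set b)" and b: "set b \<subseteq> carrier_vec n"
    and hdb: "hd b = v" and len_b: "length b = n" by auto
  have n: "n \<noteq> 0" using v0 v by (metis carrier_vecD eq_vecI index_zero_vec(2) less_nat_zero_code)
  from hdb len_b n obtain vs where bv: "b = v # vs" by (cases b, auto)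
  define ws where "ws = gram_schmidt n b"
  from gram_schmidt_result[OF b dist_b indep refl, folded ws_def]
  have ws: "set ws \<subseteq> carrier_vec n" "corthogonal ws" "length ws = n" by (auto simp: len_b)
  from gram_schmidt_hd[OF v, of vs, folded bv] have hdws: "hd ws = v" unfolding ws_def .
  have ws0: "ws ! 0 = v" using hdws ws(3) n by (cases ws) auto
  define ws' where "ws' = map (\<lambda>w. (1 / sqrt (w \<bullet> w)) \<cdot>\<^sub>v w) ws"
  have ws'c: "\<And>i. i < n \<Longrightarrow> ws' ! i \<in> carrier_vec n" using ws unfolding ws'_def by auto
  define W where "W = mat_of_cols n ws'"
  have W: "W \<in> carrier_mat n n" unfolding W_def ws'_def using ws by auto
  have colW: "\<And>i. i < n \<Longrightarrow> col W i = ws' ! i"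
    unfolding W_def by (rule col_mat_of_cols) (use ws ws'c in \<open>auto simp: ws'_def\<close>)
  have orth: "\<And>i j. i < n \<Longrightarrow> j < n \<Longrightarrow> ws ! i \<bullet> ws ! j = 0 \<longleftrightarrow> i \<noteq> j"
    using ws(2,3) unfolding corthogonal_def by simp
  have "transpose_mat W * W = 1\<^sub>m n"
  proof (rule eq_matI)
    fix i j assume i: "i < dim_row (1\<^sub>m n)" and j: "j < dim_col (1\<^sub>m n)"
    hence i: "i < n" and j: "j < n" by auto
    have wi: "ws ! i \<in> carrier_vec n" and wj: "ws ! j \<in> carrier_vec n" using ws i j by auto
    have "(transpose_mat W * W) $$ (i,j) = col W i \<bullet> col W j" using W i j by simp
    also have "\<dots> = (1 / sqrt (ws!i \<bullet> ws!i)) * (1 / sqrt (ws!j \<bullet> ws!j)) * (ws ! i \<bullet> ws ! j)"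
      unfolding colW[OF i] colW[OF j] ws'_def using i j ws wi wj by simp
    also have "\<dots> = 1\<^sub>m n $$ (i,j)"
    proof (cases "i = j")
      case True
      have "ws!i \<bullet> ws!i \<noteq> 0" using orth[OF i i] by simp
      hence pos: "ws!i \<bullet> ws!i > 0" using sprod_self_nonneg[of "ws!i"] by linarith
      have "(1 / sqrt (ws!i \<bullet> ws!i)) * (1 / sqrt (ws!i \<bullet> ws!i)) * (ws ! i \<bullet> ws ! i)
        = (ws ! i \<bullet> ws ! i) / (sqrt (ws!i \<bullet> ws!i))^2" by (simp add: power2_eq_square)
      also have "\<dots> = 1" using pos by simp
      finally show ?thesis using True i by simp
    next
      case False
      thus ?thesis using orth[OF i j] i j by simp
    qed
    finally show "(transpose_mat W * W) $$ (i,j) = 1\<^sub>m n $$ (i,j)" .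
  qed (use W in auto)
  moreover have "col W 0 = v" using colW[of 0] n ws0 v1 ws(3) unfolding ws'_def by simp
  ultimately show ?thesis using W by blast
qed

lemma sq_mult_carrier[simp]: "A \<in> carrier_mat n n \<Longrightarrow> B \<in> carrier_mat n n \<Longrightarrow> A * B \<in> carrier_mat n n"
  by auto
lemma sq_transpose_carrier[simp]: "A \<in> carrier_mat n n \<Longrightarrow> transpose_mat A \<in> carrier_mat n n"
  by auto
lemma sq_assoc: "A \<in> carrier_mat n n \<Longrightarrow> B \<in> carrier_mat n n \<Longrightarrow> C \<in> carrier_mat n n \<Longrightarrow> A * B * C = A * (B * C)"
  by (rule assoc_mult_mat)

lemma spectral:
  fixes A :: "real mat"
  assumes "A \<in> carrier_mat n n" "transpose_mat A = A"
  shows "\<exists>V D. V \<in> carrier_mat n n \<and> D \<in> carrier_mat n n \<and> diagonal_mat D \<and>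
     transpose_mat V * V = 1\<^sub>m n \<and> A = V * D * transpose_mat V"
  using assms
proof (induct n arbitrary: A)
  case 0
  show ?case
    by (rule exI[of _ "1\<^sub>m 0"], rule exI[of _ "1\<^sub>m 0"]) (use 0 in \<open>auto simp: diagonal_mat_def intro!: eq_matI\<close>)
next
  case (Suc m A)
  have A: "A \<in> carrier_mat (Suc m) (Suc m)" and sym: "transpose_mat A = A" using Suc by auto
  obtain e where "eigenvalue A e" using sym_real_eigenvalue[OF A sym] by auto
  then obtain v where v: "v \<in> carrier_vec (Suc m)" "v \<noteq> 0\<^sub>v (Suc m)" "A *\<^sub>v v = e \<cdot>\<^sub>v v"
    unfolding eigenvalue_def eigenvector_def using A by auto
  have "v \<bullet> v \<noteq> 0" using conjugate_square_eq_0_vec[OF v(1)] v(2) by simp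
  hence vpos: "v \<bullet> v > 0" using sprod_self_nonneg[of v] by linarith
  define v1 where "v1 = (1 / sqrt (v \<bullet> v)) \<cdot>\<^sub>v v"
  have v1: "v1 \<in> carrier_vec (Suc m)" unfolding v1_def using v by auto
  have v11: "v1 \<bullet> v1 = 1"
  proof -
    have "v1 \<bullet> v1 = (1 / sqrt (v \<bullet> v)) * (1 / sqrt (v \<bullet> v)) * (v \<bullet> v)"
      unfolding v1_def using v by simp
    also have "\<dots> = (v \<bullet> v) / (sqrt (v \<bullet> v))^2" by (simp add: power2_eq_square)
    also have "\<dots> = 1" using vpos by simp
    finally show ?thesis .
  qed
  have Av1: "A *\<^sub>v v1 = e \<cdot>\<^sub>v v1"
    unfolding v1_def mult_mat_vec[OF A v(1)] v(3) by (auto simp: smult_smult_assoc mult.commute)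
  obtain W where W: "W \<in> carrier_mat (Suc m) (Suc m)" and WW: "transpose_mat W * W = 1\<^sub>m (Suc m)"
    and W0: "col W 0 = v1"
    using orthonormal_completion[OF v1 v11] by auto
  have Wt: "transpose_mat W \<in> carrier_mat (Suc m) (Suc m)" using W by auto
  have WW': "W * transpose_mat W = 1\<^sub>m (Suc m)" using mat_mult_left_right_inverse[OF Wt W WW] .
  define A' where "A' = transpose_mat W * A * W"
  have A': "A' \<in> carrier_mat (Suc m) (Suc m)" unfolding A'_def using W A by auto
  have symA': "transpose_mat A' = A'"
  proof -
    have "transpose_mat A' = transpose_mat W * transpose_mat (transpose_mat W * A)"
      unfolding A'_def by (rule transpose_mult[of _ "Suc m" "Suc m"]) (use W A in auto)
    also have "transpose_mat (transpose_mat W * A) = transpose_mat A * W"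
      by (subst transpose_mult[of _ "Suc m" "Suc m"]) (use W A in auto)
    also have "transpose_mat W * (transpose_mat A * W) = transpose_mat W * transpose_mat A * W"
      using W A by (simp add: assoc_mult_mat[of _ "Suc m" "Suc m"])
    finally show ?thesis unfolding sym A'_def .
  qed
  have col0: "A' $$ (i,0) = (if i = 0 then e else 0)" if i: "i < Suc m" for i
  proof -
    have "A' = transpose_mat W * (A * W)" unfolding A'_def using W A by (simp add: assoc_mult_mat[of _ "Suc m" "Suc m"])
    hence "A' $$ (i,0) = col W i \<bullet> (A *\<^sub>v col W 0)" using W A i by (simp add: mult_mat_vec_def)
    also have "\<dots> = e * (col W i \<bullet> col W 0)" unfolding W0 Av1 using v1 W i by simp
    also have "col W i \<bullet> col W 0 = (transpose_mat W * W) $$ (i,0)" using W i by simp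
    finally show ?thesis unfolding WW using i by simp
  qed
  have row0: "A' $$ (0,j) = (if j = 0 then e else 0)" if j: "j < Suc m" for j
  proof -
    have "A' $$ (0,j) = transpose_mat A' $$ (j,0)" using A' j by simp
    thus ?thesis unfolding symA' col0[OF j] .
  qed
  define A3 where "A3 = mat m m (\<lambda>(i,j). A' $$ (Suc i, Suc j))"
  have A3: "A3 \<in> carrier_mat m m" unfolding A3_def by simp
  have symA3: "transpose_mat A3 = A3"
  proof (rule eq_matI)
    fix i j assume "i < dim_row A3" "j < dim_col A3"
    hence i: "i < m" and j: "j < m" using A3 by auto
    have "A' $$ (Suc j, Suc i) = transpose_mat A' $$ (Suc i, Suc j)" using A' i j by simp
    thus "transpose_mat A3 $$ (i,j) = A3 $$ (i,j)" unfolding A3_def symA' using i j by simp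
  qed (use A3 in auto)
  obtain V3 D3 where V3: "V3 \<in> carrier_mat m m" and D3: "D3 \<in> carrier_mat m m"
    and dD3: "diagonal_mat D3" and VV3: "transpose_mat V3 * V3 = 1\<^sub>m m"
    and A3eq: "A3 = V3 * D3 * transpose_mat V3"
    using Suc(1)[OF A3 symA3] by auto
  define e1 where "e1 = mat 1 1 (\<lambda>_. e)"
  have e1: "e1 \<in> carrier_mat 1 1" unfolding e1_def by simp
  define E where "E = four_block_mat (1\<^sub>m 1) (0\<^sub>m 1 m) (0\<^sub>m m 1) V3"
  define Dd where "Dd = four_block_mat e1 (0\<^sub>m 1 m) (0\<^sub>m m 1) D3"
  have E: "E \<in> carrier_mat (Suc m) (Suc m)" unfolding E_def using V3
    by (metis four_block_carrier_mat one_carrier_mat plus_1_eq_Suc)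
  have Dd: "Dd \<in> carrier_mat (Suc m) (Suc m)" unfolding Dd_def using D3 e1
    by (metis four_block_carrier_mat plus_1_eq_Suc)
  have Et: "transpose_mat E = four_block_mat (1\<^sub>m 1) (0\<^sub>m 1 m) (0\<^sub>m m 1) (transpose_mat V3)"
    unfolding E_def by (subst transpose_four_block_mat[of _ 1 1 _ m _ m]) (use V3 in auto)
  have EtE: "transpose_mat E * E = 1\<^sub>m (Suc m)"
    unfolding Et unfolding E_def
    by (subst mult_four_block_mat[where ?nr1.0=1 and ?n1.0=1 and ?n2.0=m and ?nr2.0=m and ?nc1.0=1 and ?nc2.0=m]) (use V3 VV3 in auto)
  have ED: "E * Dd = four_block_mat e1 (0\<^sub>m 1 m) (0\<^sub>m m 1) (V3 * D3)"
    unfolding E_def Dd_def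
    by (subst mult_four_block_mat[where ?nr1.0=1 and ?n1.0=1 and ?n2.0=m and ?nr2.0=m and ?nc1.0=1 and ?nc2.0=m])
      (use V3 D3 e1 in auto)
  have EDE: "E * Dd * transpose_mat E = four_block_mat e1 (0\<^sub>m 1 m) (0\<^sub>m m 1) A3"
    unfolding Et ED A3eq
    by (subst mult_four_block_mat[where ?nr1.0=1 and ?n1.0=1 and ?n2.0=m and ?nr2.0=m and ?nc1.0=1 and ?nc2.0=m])
      (use V3 D3 e1 in auto)
  have A'eq: "A' = E * Dd * transpose_mat E"
    unfolding EDE
  proof (rule eq_matI)
    fix i j assume "i < dim_row (four_block_mat e1 (0\<^sub>m 1 m) (0\<^sub>m m 1) A3)"
      "j < dim_col (four_block_mat e1 (0\<^sub>m 1 m) (0\<^sub>m m 1) A3)"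
    hence i: "i < Suc m" and j: "j < Suc m" using e1 A3 by auto
    show "A' $$ (i,j) = four_block_mat e1 (0\<^sub>m 1 m) (0\<^sub>m m 1) A3 $$ (i,j)"
    proof (cases "i = 0")
      case True
      thus ?thesis using row0[OF j] j e1 A3 by (auto simp: e1_def)
    next
      case False
      show ?thesis
      proof (cases "j = 0")
        case True
        thus ?thesis using col0[OF i] i False e1 A3 by auto
      next
        case False
        with \<open>i \<noteq> 0\<close> obtain i' j' where "i = Suc i'" "j = Suc j'" by (metis not0_implies_Suc)
        thus ?thesis using i j e1 A3 by (auto simp: A3_def)
      qed
    qed
  qed (use A' e1 A3 in auto)
  define V where "V = W * E"
  have V: "V \<in> carrier_mat (Suc m) (Suc m)" unfolding V_def using W E by auto
  have Vt: "transpose_mat V = transpose_mat E * transpose_mat W"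
    unfolding V_def using W E by (simp add: transpose_mult)
  have "transpose_mat V * V = (transpose_mat E * transpose_mat W) * (W * E)"
    by (subst Vt) (simp add: V_def)
  also have "\<dots> = transpose_mat E * ((transpose_mat W * W) * E)"
  proof -
    have Etc: "transpose_mat E \<in> carrier_mat (Suc m) (Suc m)" using E by auto
    have WEc: "W * E \<in> carrier_mat (Suc m) (Suc m)" using W E by auto
    show ?thesis using assoc_mult_mat[OF Etc Wt WEc] assoc_mult_mat[OF Wt W E] by simp
  qed
  finally have VV: "transpose_mat V * V = 1\<^sub>m (Suc m)" using EtE E unfolding WW by simp
  have WWX: "\<And>X. X \<in> carrier_mat (Suc m) (Suc m) \<Longrightarrow> W * (transpose_mat W * X) = X"
    using W WW' by (simp add: sq_assoc[symmetric])
  have "A = W * A' * transpose_mat W"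
    unfolding A'_def using W A WW' by (simp add: sq_assoc WWX)
  also have "\<dots> = V * Dd * transpose_mat V"
    by (subst Vt, unfold A'eq V_def) (use W E Dd in \<open>simp add: sq_assoc\<close>)
  finally have Aeq: "A = V * Dd * transpose_mat V" .
  have dDd: "diagonal_mat Dd"
    unfolding diagonal_mat_def
  proof (intro allI impI)
    fix i j assume "i < dim_row Dd" "j < dim_col Dd" "i \<noteq> j"
    thus "Dd $$ (i,j) = 0" using dD3 e1 D3 unfolding Dd_def diagonal_mat_def by auto
  qed
  show ?case using V Dd dDd VV Aeq by blast
qed




lemma proots_lin_prod: "proots (\<Prod>a\<leftarrow>es. [:-a, 1:]) = mset (es :: real list)"
proof (induct es)
  case (Cons a es)
  have nz: "(\<Prod>a\<leftarrow>es. [:-a, 1::real:]) \<noteq> 0"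
    by (auto simp: prod_list_zero_iff)
  have lin: "proots [:-a, 1:] = {#a#}"
    by (rule multiset_eqI) (auto simp: count_proots order_power_n_n[of _ 1, simplified])
  have "proots (\<Prod>x\<leftarrow>a#es. [:-x, 1:]) = proots [:-a, 1:] + proots (\<Prod>x\<leftarrow>es. [:-x, 1:])"
  proof -
    have eq: "(\<Prod>x\<leftarrow>a#es. [:-x, 1:]) = [:-a, 1:] * (\<Prod>x\<leftarrow>es. [:-x, 1::real:])" by simp
    show ?thesis unfolding eq by (rule proots_mult) (use nz in auto)
  qed
  thus ?case using Cons lin by simp
qed simp

lemma eigs_spectral:
  fixes M V D :: "real mat"
  assumes V: "V \<in> carrier_mat n n" and D: "D \<in> carrier_mat n n" and dD: "diagonal_mat D"
    and VV: "transpose_mat V * V = 1\<^sub>m n" and M: "M = V * D * transpose_mat V"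
  shows "eigs M = sort (diag_mat D)"
proof -
  have VV': "V * transpose_mat V = 1\<^sub>m n"
    using mat_mult_left_right_inverse[of "transpose_mat V" n V] V VV by auto
  have Mc: "M \<in> carrier_mat n n" using M V D by simp
  have "similar_mat_wit M D V (transpose_mat V)"
    unfolding similar_mat_wit_def Let_def using Mc V D VV VV' M by auto
  hence "char_poly M = char_poly D" using char_poly_similar unfolding similar_mat_def by blast
  also have "\<dots> = (\<Prod>a\<leftarrow>diag_mat D. [:-a, 1:])"
  proof (rule char_poly_upper_triangular[OF D])
    show "upper_triangular D" using dD D unfolding diagonal_mat_def upper_triangular_def by auto
  qed
  finally show ?thesis unfolding eigs_def by (simp add: proots_lin_prod)
qed

lemma diag_mult_vec:
  fixes D :: "real mat"
  assumes D: "D \<in> carrier_mat n n" and dD: "diagonal_mat D" and c: "c \<in> carrier_vec n" and j: "j < n"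
  shows "(D *\<^sub>v c) $ j = D $$ (j,j) * c $ j"
proof -
  have "(D *\<^sub>v c) $ j = (\<Sum>k\<in>{0..<n}. D $$ (j,k) * c $ k)"
    using D c j by (simp add: scalar_prod_def)
  also have "\<dots> = (\<Sum>k\<in>{0..<n}. if k = j then D $$ (j,j) * c $ j else 0)"
    by (rule sum.cong) (use dD D j in \<open>auto simp: diagonal_mat_def\<close>)
  also have "\<dots> = D $$ (j,j) * c $ j" using j by simp
  finally show ?thesis .
qed

lemma sq_assoc_vec: "A \<in> carrier_mat n n \<Longrightarrow> B \<in> carrier_mat n n \<Longrightarrow> v \<in> carrier_vec n \<Longrightarrow> (A * B) *\<^sub>v v = A *\<^sub>v (B *\<^sub>v v)"
  by (rule assoc_mult_mat_vec)

lemma quad_form: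
  fixes M V D :: "real mat"
  assumes V: "V \<in> carrier_mat n n" and D: "D \<in> carrier_mat n n" and dD: "diagonal_mat D"
    and VV: "transpose_mat V * V = 1\<^sub>m n" and M: "M = V * D * transpose_mat V"
    and y: "y \<in> carrier_vec n"
  shows "y \<bullet> (M *\<^sub>v y) = (\<Sum>j<n. D $$ (j,j) * ((transpose_mat V *\<^sub>v y) $ j)^2)"
    and "y \<bullet> y = (\<Sum>j<n. ((transpose_mat V *\<^sub>v y) $ j)^2)"
proof -
  have VV': "V * transpose_mat V = 1\<^sub>m n"
    using mat_mult_left_right_inverse[of "transpose_mat V" n V] V VV by auto
  define c where "c = transpose_mat V *\<^sub>v y"
  have c: "c \<in> carrier_vec n" unfolding c_def using V y by simp
  have Vz: "\<And>z. z \<in> carrier_vec n \<Longrightarrow> y \<bullet> (V *\<^sub>v z) = c \<bullet> z"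
    unfolding c_def using transpose_vec_mult_scalar[OF V _ y] by simp
  have "M *\<^sub>v y = V *\<^sub>v (D *\<^sub>v c)" unfolding M c_def
    using sq_assoc_vec[of "V * D" n "transpose_mat V" y] sq_assoc_vec[of V n D "transpose_mat V *\<^sub>v y"] V D y
    by simp
  hence "y \<bullet> (M *\<^sub>v y) = c \<bullet> (D *\<^sub>v c)" using Vz[of "D *\<^sub>v c"] D c by simp
  also have "\<dots> = (\<Sum>j\<in>{0..<n}. c $ j * (D *\<^sub>v c) $ j)" using D c by (simp add: scalar_prod_def)
  also have "\<dots> = (\<Sum>j<n. D $$ (j,j) * c $ j ^ 2)"
    unfolding lessThan_atLeast0
    by (rule sum.cong) (use diag_mult_vec[OF D dD c] in \<open>auto simp: power2_eq_square\<close>)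
  finally show "y \<bullet> (M *\<^sub>v y) = (\<Sum>j<n. D $$ (j,j) * ((transpose_mat V *\<^sub>v y) $ j)^2)"
    unfolding c_def .
  have "V *\<^sub>v c = y" unfolding c_def using V y VV'
    by (simp add: sq_assoc_vec[symmetric])
  hence "y \<bullet> y = c \<bullet> c" using Vz[OF c] by simp
  also have "\<dots> = (\<Sum>j<n. c $ j ^ 2)" using c
    by (simp add: scalar_prod_def lessThan_atLeast0 power2_eq_square)
  finally show "y \<bullet> y = (\<Sum>j<n. ((transpose_mat V *\<^sub>v y) $ j)^2)" unfolding c_def .
qed



lemma zero_row_kernel:
  fixes M :: "real mat"
  assumes M: "M \<in> carrier_mat n n" and k: "k < n" and z: "\<And>l. l < n \<Longrightarrow> M $$ (k,l) = 0"
  shows "\<exists>c. c \<in> carrier_vec n \<and> c \<noteq> 0\<^sub>v n \<and> M *\<^sub>v c = 0\<^sub>v n"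
proof -
  have "M = mat\<^sub>r n n (\<lambda>i. if i = k then 0\<^sub>v n else row M i)"
    by (rule eq_matI) (use M z in auto)
  hence "det M = 0" using det_row_0[OF k, of "\<lambda>i. row M i"] M by auto
  thus ?thesis using det_0_iff_vec_prod_zero[OF M] by auto
qed
lemma key_count:
  fixes A P V D U F :: "real mat"
  assumes A: "A \<in> carrier_mat n n" and P: "P \<in> carrier_mat n n"
    and V: "V \<in> carrier_mat n n" and D: "D \<in> carrier_mat n n" and dD: "diagonal_mat D"
    and VV: "transpose_mat V * V = 1\<^sub>m n" and Aeq: "A = V * D * transpose_mat V"
    and U: "U \<in> carrier_mat n n" and F: "F \<in> carrier_mat n n" and dF: "diagonal_mat F"
    and UU: "transpose_mat U * U = 1\<^sub>m n" and Beq: "P * A * P = U * F * transpose_mat U"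
    and PP: "P * P = P" and Pt: "transpose_mat P = P" and t: "0 \<le> t"
  shows "card {i. i < n \<and> F $$ (i,i) > t} \<le> card {j. j < n \<and> D $$ (j,j) > t}"
proof (rule ccontr)
  define I where "I = {i. i < n \<and> F $$ (i,i) > t}"
  define J where "J = {j. j < n \<and> D $$ (j,j) > t}"
  assume "\<not> card {i. i < n \<and> F $$ (i,i) > t} \<le> card {j. j < n \<and> D $$ (j,j) > t}"
  hence lt: "card J < card I" unfolding I_def J_def by simp
  have fI: "finite I" and fJ: "finite J" unfolding I_def J_def by auto
  obtain h where hJ: "h ` J \<subseteq> I" and hinj: "inj_on h J"
    using card_le_inj[OF fJ fI] lt by auto
  have "card (h ` J) = card J" using card_image[OF hinj] .
  hence "h ` J \<noteq> I" using lt by auto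
  then obtain k where kI: "k \<in> I" and kJ: "k \<notin> h ` J" using hJ by auto
  have kn: "k < n" using kI unfolding I_def by auto
  define G where "G = transpose_mat V * P * U"
  have G: "G \<in> carrier_mat n n" unfolding G_def using V P U by simp
  define Mx where "Mx = mat n n (\<lambda>(i,l). if i \<notin> I then (if l = i then 1 else 0)
      else if i \<in> h ` J then G $$ (the_inv_into J h i, l) else 0)"
  have Mx: "Mx \<in> carrier_mat n n" unfolding Mx_def by simp
  obtain c where c: "c \<in> carrier_vec n" and c0: "c \<noteq> 0\<^sub>v n" and Mc: "Mx *\<^sub>v c = 0\<^sub>v n"
    using zero_row_kernel[OF Mx kn] kI kJ kn unfolding Mx_def by auto
  have Mxc: "(Mx *\<^sub>v c) $ i = (\<Sum>l\<in>{0..<n}. Mx $$ (i,l) * c $ l)" if "i < n" for i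
    using that Mx c by (simp add: scalar_prod_def)
  have cI: "c $ i = 0" if "i < n" "i \<notin> I" for i
  proof -
    have "(\<Sum>l\<in>{0..<n}. Mx $$ (i,l) * c $ l) = (\<Sum>l\<in>{0..<n}. if l = i then c $ i else 0)"
      by (rule sum.cong) (use that in \<open>auto simp: Mx_def\<close>)
    also have "\<dots> = c $ i" using that by simp
    finally show ?thesis using Mxc[OF that(1)] Mc that by simp
  qed
  have GJ: "(G *\<^sub>v c) $ j = 0" if "j \<in> J" for j
  proof -
    have jn: "j < n" using that unfolding J_def by auto
    have hj: "h j \<in> I" "h j \<in> h ` J" using hJ that by auto
    have hjn: "h j < n" using hj unfolding I_def by auto
    have inv: "the_inv_into J h (h j) = j" using the_inv_into_f_f[OF hinj that] .
    have "(\<Sum>l\<in>{0..<n}. Mx $$ (h j,l) * c $ l) = (\<Sum>l\<in>{0..<n}. G $$ (j,l) * c $ l)"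
      by (rule sum.cong) (use hj hjn inv in \<open>auto simp: Mx_def\<close>)
    also have "\<dots> = (G *\<^sub>v c) $ j" using G c jn by (simp add: scalar_prod_def)
    finally show ?thesis using Mxc[OF hjn] Mc hjn by simp
  qed
  define w where "w = U *\<^sub>v c"
  have w: "w \<in> carrier_vec n" unfolding w_def using U c by simp
  have Utw: "transpose_mat U *\<^sub>v w = c" unfolding w_def
    using sq_assoc_vec[of "transpose_mat U" n U c] U c UU by simp
  define y where "y = P *\<^sub>v w"
  have y: "y \<in> carrier_vec n" unfolding y_def using P w by simp
  have Vty: "transpose_mat V *\<^sub>v y = G *\<^sub>v c" unfolding y_def w_def G_def
    using sq_assoc_vec[of "transpose_mat V * P" n U c] sq_assoc_vec[of "transpose_mat V" n P "U *\<^sub>v c"] V P U c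
    by simp
  define B where "B = P * A * P"
  have B: "B \<in> carrier_mat n n" unfolding B_def using P A by simp
  note qB = quad_form[OF U F dF UU Beq[folded B_def] w, unfolded Utw]
  note qA = quad_form[OF V D dD VV Aeq y, unfolded Vty]
  have Pz: "\<And>z. z \<in> carrier_vec n \<Longrightarrow> w \<bullet> (P *\<^sub>v z) = y \<bullet> z"
    unfolding y_def using transpose_vec_mult_scalar[OF P _ w] Pt by simp
  have wBw: "w \<bullet> (B *\<^sub>v w) = y \<bullet> (A *\<^sub>v y)"
  proof -
    have "B *\<^sub>v w = P *\<^sub>v (A *\<^sub>v y)" unfolding B_def y_def
      using sq_assoc_vec[of "P * A" n P w] sq_assoc_vec[of P n A "P *\<^sub>v w"] P A w by simp
    thus ?thesis using Pz[of "A *\<^sub>v y"] A y by simp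
  qed
  have yy: "y \<bullet> y = w \<bullet> y"
  proof -
    have "y \<bullet> y = w \<bullet> (P *\<^sub>v y)" using Pz[OF y] by simp
    also have "P *\<^sub>v y = y" unfolding y_def using sq_assoc_vec[of P n P w] P w PP by simp
    finally show ?thesis .
  qed
  have yw: "y \<bullet> y \<le> w \<bullet> w"
  proof -
    have "0 \<le> (\<Sum>i\<in>{0..<n}. (w $ i - y $ i)^2)" by (intro sum_nonneg) auto
    also have "\<dots> = (\<Sum>i\<in>{0..<n}. w $ i * w $ i - 2 * (w $ i * y $ i) + y $ i * y $ i)"
      by (rule sum.cong) (auto simp: power2_eq_square algebra_simps)
    also have "\<dots> = (\<Sum>i\<in>{0..<n}. w $ i * w $ i) - 2 * (\<Sum>i\<in>{0..<n}. w $ i * y $ i) + (\<Sum>i\<in>{0..<n}. y $ i * y $ i)"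
      by (simp add: sum.distrib sum_subtractf sum_distrib_left)
    also have "\<dots> = w \<bullet> w - 2 * (w \<bullet> y) + y \<bullet> y" using w y by (simp add: scalar_prod_def)
    finally show ?thesis using yy by simp
  qed
  have s1: "(\<Sum>j<n. D $$ (j,j) * ((G *\<^sub>v c) $ j)^2) \<le> (\<Sum>j<n. t * ((G *\<^sub>v c) $ j)^2)"
  proof (rule sum_mono)
    fix j assume j: "j \<in> {..<n}"
    show "D $$ (j,j) * ((G *\<^sub>v c) $ j)^2 \<le> t * ((G *\<^sub>v c) $ j)^2"
    proof (cases "j \<in> J")
      case True thus ?thesis using GJ by simp
    next
      case False
      hence "D $$ (j,j) \<le> t" using j unfolding J_def by auto
      thus ?thesis by (intro mult_right_mono) auto
    qed
  qed
  obtain i0 where i0: "i0 < n" "c $ i0 \<noteq> 0" using c c0 by (metis eq_vecI carrier_vecD index_zero_vec)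
  have i0I: "i0 \<in> I" using cI i0 by auto
  have s2: "(\<Sum>i<n. t * (c $ i)^2) < (\<Sum>i<n. F $$ (i,i) * (c $ i)^2)"
  proof (rule sum_strict_mono_ex1)
    show "\<forall>i\<in>{..<n}. t * (c $ i)^2 \<le> F $$ (i,i) * (c $ i)^2"
    proof
      fix i assume i: "i \<in> {..<n}"
      show "t * (c $ i)^2 \<le> F $$ (i,i) * (c $ i)^2"
      proof (cases "i \<in> I")
        case True
        hence "t \<le> F $$ (i,i)" unfolding I_def by auto
        thus ?thesis by (intro mult_right_mono) auto
      next
        case False thus ?thesis using cI i by simp
      qed
    qed
    show "\<exists>i\<in>{..<n}. t * (c $ i)^2 < F $$ (i,i) * (c $ i)^2"
      using i0 i0I unfolding I_def by (intro bexI[of _ i0]) auto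
  qed auto
  have "t * (w \<bullet> w) < w \<bullet> (B *\<^sub>v w)"
    using s2 qB by (simp add: sum_distrib_left)
  also have "\<dots> = y \<bullet> (A *\<^sub>v y)" by (rule wBw)
  also have "\<dots> \<le> t * (y \<bullet> y)" using s1 qA by (simp add: sum_distrib_left)
  also have "\<dots> \<le> t * (w \<bullet> w)" using yw t by (rule mult_left_mono)
  finally show False by simp
qed




lemma sorted_cmp:
  fixes xs ys :: "real list"
  assumes lx: "length xs = n" and ly: "length ys = n" and sx: "sorted xs" and sy: "sorted ys"
    and nn: "\<And>i. i < n \<Longrightarrow> 0 \<le> ys ! i"
    and cnt: "\<And>t. 0 \<le> t \<Longrightarrow> length (filter (\<lambda>x. x > t) xs) \<le> length (filter (\<lambda>x. x > t) ys)"
    and k: "k < n"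
  shows "xs ! k \<le> ys ! k"
proof (rule ccontr)
  assume "\<not> xs ! k \<le> ys ! k"
  hence gt: "xs ! k > ys ! k" by simp
  define t where "t = ys ! k"
  have t: "0 \<le> t" unfolding t_def using nn k .
  have "{k..<n} \<subseteq> {i. i < length xs \<and> xs ! i > t}"
  proof
    fix i assume "i \<in> {k..<n}"
    hence "k \<le> i" "i < n" by auto
    hence "xs ! k \<le> xs ! i" using sorted_nth_mono[OF sx] lx by auto
    thus "i \<in> {i. i < length xs \<and> xs ! i > t}" using gt \<open>i < n\<close> lx unfolding t_def by auto
  qed
  hence c1: "n - k \<le> length (filter (\<lambda>x. x > t) xs)"
  proof -
    have "card {k..<n} \<le> card {i. i < length xs \<and> xs ! i > t}"
      by (rule card_mono[OF _ \<open>{k..<n} \<subseteq> _\<close>]) auto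
    thus ?thesis unfolding length_filter_conv_card by simp
  qed
  have "{i. i < length ys \<and> ys ! i > t} \<subseteq> {Suc k..<n}"
  proof
    fix i assume i: "i \<in> {i. i < length ys \<and> ys ! i > t}"
    have "Suc k \<le> i"
    proof (rule ccontr)
      assume "\<not> Suc k \<le> i"
      hence "i \<le> k" by simp
      hence "ys ! i \<le> ys ! k" using sorted_nth_mono[OF sy] ly k by auto
      thus False using i unfolding t_def by auto
    qed
    thus "i \<in> {Suc k..<n}" using i ly by auto
  qed
  hence c2: "length (filter (\<lambda>x. x > t) ys) \<le> n - Suc k"
  proof -
    have "card {i. i < length ys \<and> ys ! i > t} \<le> card {Suc k..<n}"
      by (rule card_mono[OF _ \<open>_ \<subseteq> {Suc k..<n}\<close>]) auto
    thus ?thesis unfolding length_filter_conv_card by simp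
  qed
  show False using c1 c2 cnt[OF t] k by linarith
qed

lemma filter_diag_card:
  "D \<in> carrier_mat n n \<Longrightarrow> length (filter P (diag_mat D)) = card {i. i < n \<and> P (D $$ (i,i))}"
  unfolding length_filter_conv_card diag_mat_def by (intro arg_cong[where f=card]) auto

lemma eig_le:
  fixes A P :: "real mat"
  assumes psd: "psd_mat n A" and proj: "orth_proj_mat n P"
  shows "length (eigs A) = n" "length (eigs (P * A * P)) = n" "sorted (eigs A)"
    "\<And>k. k < n \<Longrightarrow> eigs (P * A * P) ! k \<le> eigs A ! k"
proof -
  have A: "A \<in> carrier_mat n n" and symA: "transpose_mat A = A"
    and pos: "\<And>x. x \<in> carrier_vec n \<Longrightarrow> 0 \<le> x \<bullet> (A *\<^sub>v x)"
    using psd unfolding psd_mat_def symmetric_mat_def by auto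
  have P: "P \<in> carrier_mat n n" and PP: "P * P = P" and Pt: "transpose_mat P = P"
    using proj unfolding orth_proj_mat_def by auto
  define B where "B = P * A * P"
  have B: "B \<in> carrier_mat n n" unfolding B_def using P A by simp
  have symB: "transpose_mat B = B"
  proof -
    have "transpose_mat B = transpose_mat P * transpose_mat (P * A)"
      unfolding B_def by (rule transpose_mult[of _ n n]) (use P A in auto)
    also have "transpose_mat (P * A) = transpose_mat A * transpose_mat P"
      by (rule transpose_mult[of _ n n]) (use P A in auto)
    finally show ?thesis unfolding symA Pt B_def using P A by (simp add: sq_assoc)
  qed
  obtain V D where V: "V \<in> carrier_mat n n" and D: "D \<in> carrier_mat n n" and dD: "diagonal_mat D"
    and VV: "transpose_mat V * V = 1\<^sub>m n" and Aeq: "A = V * D * transpose_mat V"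
    using spectral[OF A symA] by blast
  obtain U F where U: "U \<in> carrier_mat n n" and F: "F \<in> carrier_mat n n" and dF: "diagonal_mat F"
    and UU: "transpose_mat U * U = 1\<^sub>m n" and Beq: "B = U * F * transpose_mat U"
    using spectral[OF B symB] by blast
  have eA: "eigs A = sort (diag_mat D)" by (rule eigs_spectral[OF V D dD VV Aeq])
  have eB: "eigs B = sort (diag_mat F)" by (rule eigs_spectral[OF U F dF UU Beq])
  show lA: "length (eigs A) = n" unfolding eA using D by (simp add: diag_mat_def)
  show lB: "length (eigs (P * A * P)) = n" unfolding B_def[symmetric] eB using F by (simp add: diag_mat_def)
  show "sorted (eigs A)" unfolding eA by simp
  have Dnn: "0 \<le> D $$ (j,j)" if j: "j < n" for j
  proof -
    have "D = transpose_mat V * A * V"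
      unfolding Aeq using V D VV by (simp add: sq_assoc sq_assoc[symmetric, of "transpose_mat V" n V])
    hence "D $$ (j,j) = col V j \<bullet> (A *\<^sub>v col V j)"
      using V A j by (simp add: sq_assoc mult_mat_vec_def)
    thus ?thesis using pos[of "col V j"] V j by simp
  qed
  fix k assume k: "k < n"
  show "eigs (P * A * P) ! k \<le> eigs A ! k"
    unfolding B_def[symmetric]
  proof (rule sorted_cmp[of _ n])
    show "length (eigs B) = n" using lB unfolding B_def .
    show "length (eigs A) = n" by (rule lA)
    show "sorted (eigs B)" "sorted (eigs A)" unfolding eA eB by simp_all
    show "k < n" by (rule k)
    fix i assume i: "i < n"
    have "eigs A ! i \<in> set (diag_mat D)" using lA i unfolding eA by (metis nth_mem set_sort)
    thus "0 \<le> eigs A ! i" using Dnn D unfolding diag_mat_def by auto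
  next
    fix t :: real assume t: "0 \<le> t"
    have "length (filter (\<lambda>x. x > t) (eigs B)) = card {i. i < n \<and> F $$ (i,i) > t}"
      unfolding eB filter_sort length_sort by (rule filter_diag_card[OF F])
    also have "\<dots> \<le> card {j. j < n \<and> D $$ (j,j) > t}"
      by (rule key_count[OF A P V D dD VV Aeq U F dF UU Beq[unfolded B_def] PP Pt t])
    also have "\<dots> = length (filter (\<lambda>x. x > t) (eigs A))"
      unfolding eA filter_sort length_sort by (rule filter_diag_card[OF D, symmetric])
    finally show "length (filter (\<lambda>x. x > t) (eigs B)) \<le> length (filter (\<lambda>x. x > t) (eigs A))" .
  qed
qed

theorem corollary3p7:
  fixes A P :: "real mat" and n T :: nat and u :: real
  assumes "psd_mat n A"
    and "orth_proj_mat n P"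
    and "1 \<le> T" and "T \<le> n"
    and "u > lambda_max A"
  shows "(\<Sum>i = n - T + 1..n. 1 / (u - eig (P * A * P) i))
           \<le> (\<Sum>i = n - T + 1..n. 1 / (u - eig A i))"
proof (rule sum_mono)
  note E = eig_le[OF assms(1,2)]
  have dA: "dim_row A = n" using assms(1) unfolding psd_mat_def by auto
  fix i assume i: "i \<in> {n - T + 1..n}"
  hence i1: "1 \<le> i" and iN: "i \<le> n" by auto
  have le: "eig (P * A * P) i \<le> eig A i" unfolding eig_def using E(4)[of "i - 1"] i1 iN by simp
  have "eig A i \<le> eig A n" unfolding eig_def
    using sorted_nth_mono[OF E(3), of "i - 1" "n - 1"] E(1) i1 iN by simp
  hence "eig A i < u" using assms(5) unfolding lambda_max_def dA by simp
  thus "1 / (u - eig (P * A * P) i) \<le> 1 / (u - eig A i)"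
    using le by (intro divide_left_mono) auto
qed


end
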